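(* Let $G$ be a complete geometric graph and let $B$ be a subgraph of $G$. If $B$ is a star of $G$ or a comb of $G$, then $B$ shares at least one edge with every simple spanning subgraph of $G$.
   Context: A geometric graph is a graph whose vertices are points in the plane in general position (no three collinear) and whose edges are straight segments between pairs of vertices; $G$ is complete if all pairs of vertices are joined. A geometric graph is simple if no two of its edges cross. A simple spanning subgraph of $G$ is a subgraph $H\subseteq G$ that is non-crossing and has no isolated vertices, i.e., every vertex of $G$ is incident to an edge of $H$. A star of $G$ is the set of all edges of $G$ emanating from a single vertex. A comb of $G$ is a simple spanning subgraph $B$ of $G$ such that: (1) the intersection of $B$ with the boundary of $\mathrm{conv}(V(G))$ is a simple path $P$; (2) each vertex in $V(G)\setminus P$ is connected by a unique edge of $B$ to an interior (non-endpoint) vertex of $P$; (3) for each edge $e$ of $B$, the line spanned by $e$ does not cross any edge of $B$. *)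

theory Defs
  imports "HOL-Analysis.Analysis"
begin

text \<open>Points are in the Euclidean plane; an edge is a two-element set of points,
  drawn as the straight segment (convex hull) between them.\<close>

type_synonym pt = "real^2"

definition general_position :: "pt set \<Rightarrow> bool" where
  "general_position V \<longleftrightarrow>
     (\<forall>a\<in>V. \<forall>b\<in>V. \<forall>c\<in>V. distinct [a, b, c] \<longrightarrow> \<not> collinear {a, b, c})"

definition complete_edges :: "pt set \<Rightarrow> pt set set" where
  "complete_edges V = {{a, b} | a b. a \<in> V \<and> b \<in> V \<and> a \<noteq> b}"

definition noncrossing :: "pt set set \<Rightarrow> bool" where
  "noncrossing H \<longleftrightarrow>
     (\<forall>e1\<in>H. \<forall>e2\<in>H. e1 \<noteq> e2 \<longrightarrow> convex hull e1 \<inter> convex hull e2 \<subseteq> e1 \<inter> e2)"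

definition simple_spanning :: "pt set \<Rightarrow> pt set set \<Rightarrow> bool" where
  "simple_spanning V H \<longleftrightarrow>
     H \<subseteq> complete_edges V \<and> noncrossing H \<and> (\<forall>v\<in>V. \<exists>e\<in>H. v \<in> e)"

definition star :: "pt set \<Rightarrow> pt \<Rightarrow> pt set set" where
  "star V v = {{v, w} | w. w \<in> V \<and> w \<noteq> v}"

definition is_star :: "pt set \<Rightarrow> pt set set \<Rightarrow> bool" where
  "is_star V B \<longleftrightarrow> (\<exists>v\<in>V. B = star V v)"

definition path_edges :: "pt list \<Rightarrow> pt set set" where
  "path_edges ps = (\<lambda>(a, b). {a, b}) ` set (zip ps (tl ps))"

definition path_interior :: "pt list \<Rightarrow> pt set" where
  "path_interior ps = set (butlast (tl ps))"

definition boundary_edges :: "pt set \<Rightarrow> pt set set \<Rightarrow> pt set set" where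
  "boundary_edges V B = {e \<in> B. convex hull e \<subseteq> frontier (convex hull V)}"

text \<open>Orientation determinant; the line through a b crosses the segment cd iff
  c and d lie strictly on opposite sides of that line.\<close>
definition orient :: "pt \<Rightarrow> pt \<Rightarrow> pt \<Rightarrow> real" where
  "orient a b c = (b$1 - a$1) * (c$2 - a$2) - (b$2 - a$2) * (c$1 - a$1)"

definition line_crosses :: "pt \<Rightarrow> pt \<Rightarrow> pt \<Rightarrow> pt \<Rightarrow> bool" where
  "line_crosses a b c d \<longleftrightarrow> orient a b c * orient a b d < 0"

definition comb :: "pt set \<Rightarrow> pt set set \<Rightarrow> bool" where
  "comb V B \<longleftrightarrow>
     simple_spanning V B \<and>
     (\<exists>ps. length ps \<ge> 2 \<and> distinct ps \<and> set ps \<subseteq> V \<and>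
        boundary_edges V B = path_edges ps \<and>
        (\<forall>v\<in>V - set ps. (\<exists>!e. e \<in> B \<and> v \<in> e) \<and>
                          (\<exists>p\<in>path_interior ps. {v, p} \<in> B))) \<and>
     (\<forall>a b c d. {a, b} \<in> B \<longrightarrow> {c, d} \<in> B \<longrightarrow> a \<noteq> b \<longrightarrow> \<not> line_crosses a b c d)"

end

theory Submission
  imports Defs
begin


lemma orient_swap: "orient a c b = - orient a b c"
  by (simp add: orient_def algebra_simps)
lemma orient_cyc: "orient b c a = orient a b c"
  by (simp add: orient_def algebra_simps)
lemma orient_self1: "orient a b a = 0" and orient_self2: "orient a b b = 0"
  by (simp_all add: orient_def)

lemma orient_alt: "orient a b c = (a$1 - c$1) * (b$2 - c$2) - (a$2 - c$2) * (b$1 - c$1)"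
  by (simp add: orient_def algebra_simps)

lemma orient_zero_collinear:
  assumes "orient a b c = 0" shows "collinear {a, b, c}"
proof (cases "a = c")
  case True then show ?thesis by (simp add: collinear_3_expand)
next
  case False
  have key: "(a$1 - c$1) * (b$2 - c$2) = (a$2 - c$2) * (b$1 - c$1)"
    using assms by (simp add: orient_alt)
  have ne: "a$1 - c$1 \<noteq> 0 \<or> a$2 - c$2 \<noteq> 0"
    using False by (auto simp: vec_eq_iff forall_2)
  then obtain u where u1: "b$1 - c$1 = u * (a$1 - c$1)" and u2: "b$2 - c$2 = u * (a$2 - c$2)"
  proof
    assume h: "a$1 - c$1 \<noteq> 0"
    show thesis
    proof (rule that[of "(b$1 - c$1) / (a$1 - c$1)"])
      show "b$1 - c$1 = (b$1 - c$1) / (a$1 - c$1) * (a$1 - c$1)" using h by simp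
      have "(b$1 - c$1) / (a$1 - c$1) * (a$2 - c$2) = (a$2 - c$2) * (b$1 - c$1) / (a$1 - c$1)" by simp
      also have "\<dots> = b$2 - c$2" using h key by (simp add: divide_simps) (simp add: algebra_simps)
      finally show "b$2 - c$2 = (b$1 - c$1) / (a$1 - c$1) * (a$2 - c$2)" by simp
    qed
  next
    assume h: "a$2 - c$2 \<noteq> 0"
    show thesis
    proof (rule that[of "(b$2 - c$2) / (a$2 - c$2)"])
      show "b$2 - c$2 = (b$2 - c$2) / (a$2 - c$2) * (a$2 - c$2)" using h by simp
      have "(b$2 - c$2) / (a$2 - c$2) * (a$1 - c$1) = (a$1 - c$1) * (b$2 - c$2) / (a$2 - c$2)" by simp
      also have "\<dots> = b$1 - c$1" using h key by (simp add: divide_simps)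
      finally show "b$1 - c$1 = (b$2 - c$2) / (a$2 - c$2) * (a$1 - c$1)" by simp
    qed
  qed
  have "b = u *\<^sub>R a + (1 - u) *\<^sub>R c"
    unfolding vec_eq_iff forall_2 using u1 u2 by (simp add: algebra_simps)
  then show ?thesis unfolding collinear_3_expand by blast
qed

lemma cross_id1:
  "(a$1 * (orient c d a - orient c d b) + orient c d a * (b$1 - a$1)) * (orient a b c - orient a b d)
   = (c$1 * (orient a b c - orient a b d) + orient a b c * (d$1 - c$1)) * (orient c d a - orient c d b)"
  unfolding orient_def by algebra
lemma cross_id2:
  "(a$2 * (orient c d a - orient c d b) + orient c d a * (b$2 - a$2)) * (orient a b c - orient a b d)
   = (c$2 * (orient a b c - orient a b d) + orient a b c * (d$2 - c$2)) * (orient c d a - orient c d b)"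
  unfolding orient_def by algebra

lemma frac01: assumes "(x::real) * y < 0" shows "0 \<le> x / (x - y)" "x / (x - y) \<le> 1" "x - y \<noteq> 0"
proof -
  have "(x > 0 \<and> y < 0) \<or> (x < 0 \<and> y > 0)" using assms by (metis mult_less_0_iff)
  then show "0 \<le> x / (x - y)" "x / (x - y) \<le> 1" "x - y \<noteq> 0"
    by (auto simp: divide_simps)
qed

lemma segs_cross:
  assumes "orient a b c * orient a b d < 0" "orient c d a * orient c d b < 0"
  shows "convex hull {a, b} \<inter> convex hull {c, d} \<noteq> {}"
proof -
  define fa fb ga gd where "fa = orient c d a" "fb = orient c d b" "ga = orient a b c" "gd = orient a b d"
  define l where "l = fa / (fa - fb)"
  define m where "m = ga / (ga - gd)"
  have l01: "0 \<le> l" "l \<le> 1" "fa - fb \<noteq> 0" using frac01[of fa fb] assms by (auto simp: l_def fa_fb_ga_gd_def)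
  have m01: "0 \<le> m" "m \<le> 1" "ga - gd \<noteq> 0" using frac01[of ga gd] assms by (auto simp: m_def fa_fb_ga_gd_def)
  have eq: "a + l *\<^sub>R (b - a) = c + m *\<^sub>R (d - c)"
  proof -
    have e1: "(a$1 * (fa - fb) + fa * (b$1 - a$1)) * (ga - gd) = (c$1 * (ga - gd) + ga * (d$1 - c$1)) * (fa - fb)"
      using cross_id1[of a c d b] unfolding fa_fb_ga_gd_def .
    have e2: "(a$2 * (fa - fb) + fa * (b$2 - a$2)) * (ga - gd) = (c$2 * (ga - gd) + ga * (d$2 - c$2)) * (fa - fb)"
      using cross_id2[of a c d b] unfolding fa_fb_ga_gd_def .
    have "a$1 + l * (b$1 - a$1) = c$1 + m * (d$1 - c$1)"
      using e1 l01(3) m01(3) unfolding l_def m_def by (simp add: field_simps)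
    moreover have "a$2 + l * (b$2 - a$2) = c$2 + m * (d$2 - c$2)"
      using e2 l01(3) m01(3) unfolding l_def m_def by (simp add: field_simps)
    ultimately show ?thesis unfolding vec_eq_iff forall_2 by simp
  qed
  have "a + l *\<^sub>R (b - a) \<in> convex hull {a, b}" using l01 by (auto simp: convex_hull_2_alt)
  moreover have "c + m *\<^sub>R (d - c) \<in> convex hull {c, d}" using m01 by (auto simp: convex_hull_2_alt)
  ultimately show ?thesis using eq by auto
qed


lemma inner2: "(x::real^2) \<bullet> y = x$1 * y$1 + x$2 * y$2"
  by (simp add: inner_vec_def sum_2)

lemma gp_orient:
  assumes "general_position V" "a \<in> V" "b \<in> V" "c \<in> V" "a \<noteq> b" "a \<noteq> c" "b \<noteq> c"
  shows "orient a b c \<noteq> 0"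
  using assms orient_zero_collinear unfolding general_position_def by fastforce

lemma hull_side:
  assumes fin: "finite V" and gp: "general_position V" and ab: "a \<in> V" "b \<in> V" "a \<noteq> b"
    and fr: "convex hull {a, b} \<subseteq> frontier (convex hull V)"
    and z0: "z0 \<in> V" "z0 \<noteq> a" "z0 \<noteq> b"
  shows "\<exists>\<sigma>. (\<sigma> = 1 \<or> \<sigma> = -1) \<and> (\<forall>z\<in>V. z \<noteq> a \<longrightarrow> z \<noteq> b \<longrightarrow> \<sigma> * orient a b z > 0)"
proof -
  define S where "S = convex hull V"
  define m where "m = (1/2) *\<^sub>R a + (1/2) *\<^sub>R b"
  have mab: "m \<in> convex hull {a, b}" unfolding m_def convex_hull_2 by force
  have cS: "compact S" unfolding S_def using fin by (simp add: finite_imp_compact_convex_hull)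
  have mS: "m \<in> S" "m \<notin> interior S"
    using fr mab cS by (auto simp: S_def frontier_def closure_closed compact_imp_closed)
  have ncol: "\<not> collinear {a, b, z0}" using gp ab z0 unfolding general_position_def by auto
  have "aff_dim {a, b, z0} \<le> aff_dim V" using ab z0 by (intro aff_dim_subset) auto
  moreover have "aff_dim {a, b, z0} > 1" using ncol collinear_aff_dim by (metis not_le)
  moreover have "aff_dim V \<le> 2" using aff_dim_le_DIM[of V] by simp
  ultimately have "aff_dim S = int DIM(real^2)" unfolding S_def by (simp add: aff_dim_convex_hull)
  then have "affine hull S = UNIV" by (simp only: aff_dim_eq_full)
  then have ri: "rel_interior S = interior S" by (rule rel_interior_interior)
  obtain n where n0: "n \<noteq> 0" and sup: "\<And>y. y \<in> S \<Longrightarrow> n \<bullet> m \<le> n \<bullet> y"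
    using supporting_hyperplane_rel_boundary[of S m] mS ri
    by (metis S_def convex_convex_hull)
  have "a \<in> S" "b \<in> S" using ab by (auto simp: S_def hull_inc)
  then have "n \<bullet> m \<le> n \<bullet> a" "n \<bullet> m \<le> n \<bullet> b" using sup by auto
  moreover have "n \<bullet> m = (n \<bullet> a + n \<bullet> b) / 2" by (simp add: m_def inner_add_right)
  ultimately have na: "n \<bullet> a = n \<bullet> m" and nb: "n \<bullet> b = n \<bullet> m" by auto
  define d1 d2 where "d1 = b$1 - a$1" "d2 = b$2 - a$2"
  define K where "K = n$2 * d1 - n$1 * d2"
  have nd: "n$1 * d1 + n$2 * d2 = 0" using na nb by (simp add: inner2 d1_d2_def algebra_simps)
  have dne: "d1^2 + d2^2 > 0"
  proof -
    have "d1 \<noteq> 0 \<or> d2 \<noteq> 0" using ab(3) by (auto simp: d1_d2_def vec_eq_iff forall_2)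
    then show ?thesis by (auto simp: sum_power2_gt_zero_iff)
  qed
  have K0: "K \<noteq> 0"
  proof
    assume "K = 0"
    then have "n$1 * (d1^2 + d2^2) = 0" "n$2 * (d1^2 + d2^2) = 0"
      using nd unfolding K_def power2_eq_square by algebra+
    then have "n$1 = 0" "n$2 = 0" using dne by auto
    then show False using n0 by (auto simp: vec_eq_iff forall_2)
  qed
  have key: "(n \<bullet> (z - a)) * (d1^2 + d2^2) = K * orient a b z" for z
  proof -
    have "(n \<bullet> (z - a)) * (d1^2 + d2^2) = (n$1 * d1 + n$2 * d2) * (d1 * (z$1 - a$1) + d2 * (z$2 - a$2)) + K * orient a b z"
      unfolding inner2 K_def orient_def d1_d2_def power2_eq_square by (simp; algebra)
    then show ?thesis using nd by simp
  qed
  have nonneg: "K * orient a b z \<ge> 0" if "z \<in> V" for z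
  proof -
    have "z \<in> S" using that by (auto simp: S_def hull_inc)
    then have "n \<bullet> (z - a) \<ge> 0" using sup na by (simp add: inner_diff_right)
    then show ?thesis using key[of z] dne by (metis zero_le_mult_iff not_less order_less_le)
  qed
  show ?thesis
  proof (intro exI conjI ballI impI)
    show "sgn K = 1 \<or> sgn K = -1" using K0 by (simp add: sgn_if)
    fix z assume z: "z \<in> V" "z \<noteq> a" "z \<noteq> b"
    have o: "orient a b z \<noteq> 0" using gp_orient[OF gp ab(1,2) z(1) ab(3)] z by auto
    have "K * orient a b z > 0" using nonneg[OF z(1)] o K0 by (simp add: order_le_less)
    then show "sgn K * orient a b z > 0"
      using K0 by (cases "K > 0") (auto simp: sgn_if zero_less_mult_iff)
  qed
qed


lemma pos_mult_neg: "(a::real) > 0 \<Longrightarrow> a * x < 0 \<Longrightarrow> x < 0"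
  by (auto simp: mult_less_0_iff)

lemma alg_core:
  assumes sg: "\<sigma> = 1 \<or> \<sigma> = -1"
    and ls: "\<sigma> * orient P l s < 0" and lt: "\<sigma> * orient P l t > 0"
    and qs: "\<sigma> * orient P q s \<ge> 0" and qt: "\<sigma> * orient P q t \<ge> 0" and ql: "\<sigma> * orient P q l > 0"
    and hs: "orient l w s * orient l w P > 0" and ht: "orient l w t * orient l w P > 0"
    and g0: "orient P t s \<noteq> 0" and fP: "orient s t P \<noteq> 0"
  shows "orient s t P * orient s t l < 0"
proof -
  define \<alpha> \<beta> \<gamma> where "\<alpha> = orient P t l" "\<beta> = orient P l s" "\<gamma> = orient P t s"
  have I1: "\<alpha> * orient P q s + \<beta> * orient P q t = \<gamma> * orient P q l"
    unfolding \<alpha>_\<beta>_\<gamma>_def orient_def by algebra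
  have I2: "\<alpha> * orient l w s + \<beta> * orient l w t = (\<alpha> + \<beta> - \<gamma>) * orient l w P"
    unfolding \<alpha>_\<beta>_\<gamma>_def orient_def by algebra
  have I3: "- \<gamma> * orient s t l = (\<alpha> + \<beta> - \<gamma>) * orient s t P"
    unfolding \<alpha>_\<beta>_\<gamma>_def orient_def by algebra
  have ss: "\<sigma> * \<sigma> = 1" using sg by auto
  have a: "\<sigma> * \<alpha> < 0" using lt orient_swap[of P t l] unfolding \<alpha>_\<beta>_\<gamma>_def by simp
  have b: "\<sigma> * \<beta> < 0" using ls unfolding \<alpha>_\<beta>_\<gamma>_def by simp
  have "(\<sigma> * \<alpha>) * (\<sigma> * orient P q s) + (\<sigma> * \<beta>) * (\<sigma> * orient P q t) = (\<sigma> * \<gamma>) * (\<sigma> * orient P q l)"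
  proof -
    have "(\<sigma> * \<alpha>) * (\<sigma> * orient P q s) + (\<sigma> * \<beta>) * (\<sigma> * orient P q t)
        = (\<sigma> * \<sigma>) * (\<alpha> * orient P q s + \<beta> * orient P q t)" by (simp add: algebra_simps)
    also have "\<dots> = (\<sigma> * \<sigma>) * (\<gamma> * orient P q l)" using I1 by simp
    finally show ?thesis by (simp add: algebra_simps)
  qed
  moreover have "(\<sigma> * \<alpha>) * (\<sigma> * orient P q s) \<le> 0" using a qs by (simp add: mult_nonpos_nonneg)
  moreover have "(\<sigma> * \<beta>) * (\<sigma> * orient P q t) \<le> 0" using b qt by (simp add: mult_nonpos_nonneg)
  ultimately have "(\<sigma> * \<gamma>) * (\<sigma> * orient P q l) \<le> 0" by linarith
  then have "\<sigma> * \<gamma> \<le> 0" using ql by (metis mult_pos_pos not_le)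
  moreover have "\<sigma> * \<gamma> \<noteq> 0" using g0 sg unfolding \<alpha>_\<beta>_\<gamma>_def by auto
  ultimately have c: "\<sigma> * \<gamma> < 0" by (metis order_le_less)
  have "(\<sigma> * \<alpha>) * (orient l w s * orient l w P) + (\<sigma> * \<beta>) * (orient l w t * orient l w P)
      = (\<sigma> * (\<alpha> + \<beta> - \<gamma>)) * (orient l w P * orient l w P)"
  proof -
    have "(\<sigma> * \<alpha>) * (orient l w s * orient l w P) + (\<sigma> * \<beta>) * (orient l w t * orient l w P)
        = \<sigma> * orient l w P * (\<alpha> * orient l w s + \<beta> * orient l w t)" by (simp add: algebra_simps)
    also have "\<dots> = \<sigma> * orient l w P * ((\<alpha> + \<beta> - \<gamma>) * orient l w P)" using I2 by simp
    finally show ?thesis by (simp add: algebra_simps)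
  qed
  moreover have "(\<sigma> * \<alpha>) * (orient l w s * orient l w P) < 0" using a hs by (simp add: mult_neg_pos)
  moreover have "(\<sigma> * \<beta>) * (orient l w t * orient l w P) < 0" using b ht by (simp add: mult_neg_pos)
  ultimately have "(\<sigma> * (\<alpha> + \<beta> - \<gamma>)) * (orient l w P * orient l w P) < 0" by linarith
  then have d: "\<sigma> * (\<alpha> + \<beta> - \<gamma>) < 0"
    by (metis mult_less_0_iff not_square_less_zero)
  have "- (\<sigma> * \<gamma>) * (orient s t l * orient s t P) = (\<sigma> * (\<alpha> + \<beta> - \<gamma>)) * (orient s t P * orient s t P)"
  proof -
    have "- (\<sigma> * \<gamma>) * (orient s t l * orient s t P) = \<sigma> * orient s t P * (- \<gamma> * orient s t l)"
      by (simp add: algebra_simps)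
    also have "\<dots> = \<sigma> * orient s t P * ((\<alpha> + \<beta> - \<gamma>) * orient s t P)" using I3 by simp
    finally show ?thesis by (simp add: algebra_simps)
  qed
  moreover have "(\<sigma> * (\<alpha> + \<beta> - \<gamma>)) * (orient s t P * orient s t P) < 0"
    using d fP by (metis mult_neg_pos not_real_square_gt_zero)
  ultimately have "- (\<sigma> * \<gamma>) * (orient s t l * orient s t P) < 0" by simp
  then have "orient s t l * orient s t P < 0" using c pos_mult_neg[of "- (\<sigma> * \<gamma>)"] by simp
  then show ?thesis by (simp add: mult.commute)
qed


definition HB :: "pt set \<Rightarrow> pt set set \<Rightarrow> (nat \<Rightarrow> pt) \<Rightarrow> nat \<Rightarrow> (pt \<Rightarrow> nat) \<Rightarrow> real \<Rightarrow> bool" where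
"HB V E p k idx \<sigma> \<longleftrightarrow>
  1 \<le> k \<and> inj_on p {..k} \<and> (\<forall>j\<le>k. p j \<in> V) \<and> (\<sigma> = 1 \<or> \<sigma> = -1) \<and>
  (\<forall>z\<in>V. idx z \<le> k) \<and>
  (\<forall>z\<in>V. z \<in> p ` {..k} \<longrightarrow> p (idx z) = z) \<and>
  (\<forall>z\<in>V. z \<notin> p ` {..k} \<longrightarrow> 0 < idx z \<and> idx z < k \<and> {z, p (idx z)} \<in> E) \<and>
  (\<forall>j<k. {p j, p (Suc j)} \<in> E) \<and>
  (\<forall>a b c d. {a,b} \<in> E \<longrightarrow> {c,d} \<in> E \<longrightarrow> a \<noteq> b \<longrightarrow> 0 \<le> orient a b c * orient a b d) \<and>
  (\<forall>a b. {a,b} \<in> E \<longrightarrow> a \<in> V \<and> b \<in> V) \<and>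
  (\<forall>a\<in>V. \<forall>b\<in>V. \<forall>c\<in>V. a \<noteq> b \<longrightarrow> a \<noteq> c \<longrightarrow> b \<noteq> c \<longrightarrow> orient a b c \<noteq> 0) \<and>
  (\<forall>j<k. \<forall>z\<in>V. z \<noteq> p j \<longrightarrow> z \<noteq> p (Suc j) \<longrightarrow> \<sigma> * orient (p j) (p (Suc j)) z > 0)"

context
  fixes V E p k idx \<sigma>
  assumes hb: "HB V E p k idx \<sigma>"
begin

lemma hb_k: "1 \<le> k" using hb by (simp add: HB_def)
lemma hb_inj: "inj_on p {..k}" using hb by (simp add: HB_def)
lemma hb_pV: "j \<le> k \<Longrightarrow> p j \<in> V" using hb by (simp add: HB_def)
lemma hb_sg: "\<sigma> = 1 \<or> \<sigma> = -1" using hb by (simp add: HB_def)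
lemma hb_idx: "z \<in> V \<Longrightarrow> idx z \<le> k" using hb by (simp add: HB_def)
lemma hb_path: "z \<in> V \<Longrightarrow> z \<in> p ` {..k} \<Longrightarrow> p (idx z) = z" using hb by (simp add: HB_def)
lemma hb_tooth: "z \<in> V \<Longrightarrow> z \<notin> p ` {..k} \<Longrightarrow> 0 < idx z \<and> idx z < k \<and> {z, p (idx z)} \<in> E"
  using hb by (simp add: HB_def)
lemma hb_edge: "j < k \<Longrightarrow> {p j, p (Suc j)} \<in> E" using hb by (simp add: HB_def)
lemma hb_line: "{a,b} \<in> E \<Longrightarrow> {c,d} \<in> E \<Longrightarrow> a \<noteq> b \<Longrightarrow> 0 \<le> orient a b c * orient a b d"
  using hb unfolding HB_def by blast
lemma hb_EV: "{a,b} \<in> E \<Longrightarrow> a \<in> V \<and> b \<in> V" using hb unfolding HB_def by blast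
lemma hb_gp: "a \<in> V \<Longrightarrow> b \<in> V \<Longrightarrow> c \<in> V \<Longrightarrow> a \<noteq> b \<Longrightarrow> a \<noteq> c \<Longrightarrow> b \<noteq> c \<Longrightarrow> orient a b c \<noteq> 0"
  using hb unfolding HB_def by blast
lemma hb_hull: "j < k \<Longrightarrow> z \<in> V \<Longrightarrow> z \<noteq> p j \<Longrightarrow> z \<noteq> p (Suc j) \<Longrightarrow> \<sigma> * orient (p j) (p (Suc j)) z > 0"
  using hb unfolding HB_def by blast

lemma idx_p: "j \<le> k \<Longrightarrow> idx (p j) = j"
proof -
  assume j: "j \<le> k"
  have "p (idx (p j)) = p j" using hb_path[of "p j"] hb_pV[OF j] j by auto
  moreover have "idx (p j) \<le> k" using hb_idx hb_pV j by auto
  ultimately show ?thesis using hb_inj j by (auto dest: inj_onD)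
qed

lemma ne_by_idx: "z \<in> V \<Longrightarrow> j \<le> k \<Longrightarrow> idx z \<noteq> j \<Longrightarrow> z \<noteq> p j"
  using idx_p by auto

lemma ne_by_idx2: "z \<in> V \<Longrightarrow> w \<in> V \<Longrightarrow> idx z \<noteq> idx w \<Longrightarrow> z \<noteq> w"
  by auto

definition Z :: "nat \<Rightarrow> nat \<Rightarrow> nat \<Rightarrow> pt set" where
  "Z a b c = {z \<in> V. (z \<in> p ` {..k} \<and> a \<le> idx z \<and> idx z \<le> b) \<or> (z \<notin> p ` {..k} \<and> c \<le> idx z \<and> idx z \<le> b)}"

lemma pZ: "a \<le> j \<Longrightarrow> j \<le> b \<Longrightarrow> b \<le> k \<Longrightarrow> p j \<in> Z a b c"
  unfolding Z_def using hb_pV idx_p by auto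

lemma propag:
  assumes ac: "a \<le> c" and bk: "b \<le> k" and ab: "a \<le> b"
    and bas: "Q (p a)"
    and stp: "\<And>j. a \<le> j \<Longrightarrow> j < b \<Longrightarrow> Q (p j) \<Longrightarrow> Q (p (Suc j))"
    and stt: "\<And>z. z \<in> V \<Longrightarrow> z \<notin> p ` {..k} \<Longrightarrow> c \<le> idx z \<Longrightarrow> idx z \<le> b \<Longrightarrow> Q (p (idx z)) \<Longrightarrow> Q z"
  shows "\<forall>z\<in>Z a b c. Q z"
proof -
  have pj: "Q (p j)" if "a \<le> j" "j \<le> b" for j
    using that
  proof (induction j rule: dec_induct)
    case base then show ?case using bas by simp
  next
    case (step n) then show ?case using stp by simp
  qed
  show ?thesis
  proof
    fix z assume z: "z \<in> Z a b c"
    show "Q z"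
    proof (cases "z \<in> p ` {..k}")
      case True
      then have "p (idx z) = z" using z hb_path by (auto simp: Z_def)
      then show ?thesis using pj[of "idx z"] z True by (auto simp: Z_def)
    next
      case False
      then show ?thesis using z pj[of "idx z"] ac stt[of z] by (auto simp: Z_def)
    qed
  qed
qed

lemma sign_chain: "(x::real) * y > 0 \<Longrightarrow> y * z > 0 \<Longrightarrow> x * z > 0"
  by (auto simp: zero_less_mult_iff)

lemma side:
  assumes e: "{u, v} \<in> E" and uv: "u \<noteq> v"
    and ac: "a \<le> c" and bk: "b \<le> k" and ab: "a \<le> b"
    and nu: "u \<notin> Z a b c" and nv: "v \<notin> Z a b c"
  shows "\<forall>z\<in>Z a b c. orient u v z * orient u v (p a) > 0"
proof -
  have uV: "u \<in> V" "v \<in> V" using hb_EV[OF e] by auto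
  have nz: "orient u v z \<noteq> 0" if "z \<in> Z a b c" for z
  proof -
    have "z \<in> V" "z \<noteq> u" "z \<noteq> v" using that nu nv by (auto simp: Z_def)
    then show ?thesis using hb_gp[OF uV] uv by metis
  qed
  show ?thesis
  proof (rule propag[OF ac bk ab])
    have "p a \<in> Z a b c" using pZ ab bk by auto
    then have "orient u v (p a) \<noteq> 0" using nz by blast
    then show "orient u v (p a) * orient u v (p a) > 0" by (metis not_real_square_gt_zero)
  next
    fix j assume j: "a \<le> j" "j < b" and h: "orient u v (p j) * orient u v (p a) > 0"
    have z1: "p j \<in> Z a b c" "p (Suc j) \<in> Z a b c" using pZ j bk by auto
    have "0 \<le> orient u v (p j) * orient u v (p (Suc j))"
      using hb_line[OF e hb_edge uv] j bk by auto
    then have "orient u v (p j) * orient u v (p (Suc j)) > 0"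
      using nz[OF z1(1)] nz[OF z1(2)] by (simp add: order_le_less)
    then show "orient u v (p (Suc j)) * orient u v (p a) > 0"
      using h by (metis sign_chain mult.commute)
  next
    fix z assume z: "z \<in> V" "z \<notin> p ` {..k}" "c \<le> idx z" "idx z \<le> b"
      and h: "orient u v (p (idx z)) * orient u v (p a) > 0"
    have z1: "z \<in> Z a b c" "p (idx z) \<in> Z a b c" using z ac bk pZ[of a "idx z" b c] by (auto simp: Z_def)
    have "0 \<le> orient u v z * orient u v (p (idx z))"
      using hb_line[OF e _ uv] hb_tooth[OF z(1,2)] by auto
    then have "orient u v z * orient u v (p (idx z)) > 0"
      using nz[OF z1(1)] nz[OF z1(2)] by (simp add: order_le_less)
    then show "orient u v z * orient u v (p a) > 0" using h by (metis sign_chain)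
  qed
qed

lemma Z_mono: "a' \<le> a \<Longrightarrow> c' \<le> c \<Longrightarrow> b \<le> b' \<Longrightarrow> Z a b c \<subseteq> Z a' b' c'"
  unfolding Z_def by auto

lemma sg_pos: "(x::real) \<noteq> 0 \<Longrightarrow> \<not> \<sigma> * x < 0 \<Longrightarrow> \<sigma> * x > 0"
  using hb_sg by auto

lemma angular:
  assumes l: "l \<in> V" "idx l \<le> i" "l \<noteq> p i" and r: "r \<in> V" "i < idx r"
  shows "\<sigma> * orient (p i) r l > 0"
proof -
  define P q where "P = p i" "q = p (Suc i)"
  have ik: "i < k" using r hb_idx[OF r(1)] by simp
  have PV: "P \<in> V" "q \<in> V" using hb_pV ik by (auto simp: P_q_def)
  have idxP: "idx P = i" "idx q = Suc i" using idx_p ik by (auto simp: P_q_def)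
  have rP: "r \<noteq> P" "r \<noteq> l" using idxP r l by auto
  have lq: "l \<noteq> q" using idxP l by auto
  have hull_i: "\<sigma> * orient P q z > 0" if "z \<in> V" "z \<noteq> P" "z \<noteq> q" for z
    using hb_hull[OF ik that(1)] that by (simp add: P_q_def)
  have rZ: "r \<in> Z (Suc i) k (Suc i)" using r hb_idx unfolding Z_def by auto
  show ?thesis
  proof (cases "idx l = i")
    case True
    then have lnp: "l \<notin> p ` {..k}" using hb_path[OF l(1)] l(3) by auto
    have eP: "{P, l} \<in> E" using hb_tooth[OF l(1) lnp] True by (simp add: P_q_def insert_commute)
    have "P \<notin> Z (Suc i) k (Suc i)" "l \<notin> Z (Suc i) k (Suc i)" using idxP True by (auto simp: Z_def)
    then have sd: "\<forall>z\<in>Z (Suc i) k (Suc i). orient P l z * orient P l (p (Suc i)) > 0"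
      using side[OF eP l(3)[folded P_q_def, symmetric], of "Suc i" "Suc i" k] ik by auto
    have X: "orient P l r * orient P l q > 0" using sd rZ by (simp add: P_q_def)
    have Y: "\<sigma> * orient P q l > 0" using hull_i l(1) l(3) lq by (simp add: P_q_def)
    have "orient P l q = - orient P q l" "orient P r l = - orient P l r" by (rule orient_swap)+
    then show ?thesis using X Y hb_sg by (auto simp: P_q_def zero_less_mult_iff mult_less_0_iff)
  next
    case False
    then have li: "idx l < i" using l by simp
    then have i1: "1 \<le> i" by simp
    show ?thesis
    proof (cases "l = p (i - 1)")
      case True
      have "r \<noteq> p (i - 1)" using ne_by_idx[OF r(1), of "i - 1"] r ik by auto
      then have "\<sigma> * orient (p (i - 1)) (p (Suc (i - 1))) r > 0"
        using hb_hull[of "i - 1" r] ik r rP i1 by (auto simp: P_q_def)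
      then show ?thesis using True i1 orient_cyc[of "p i" r "p (i - 1)"] by simp
    next
      case lA: False
      obtain w where w: "w \<in> V" "{l, w} \<in> E" "w \<noteq> l" "idx w < i"
      proof (cases "l \<in> p ` {..k}")
        case True
        then have lp: "p (idx l) = l" using hb_path l by auto
        have "idx l \<noteq> i - 1" using lA lp by auto
        then have sa: "Suc (idx l) < i" using li by simp
        show thesis
        proof (rule that[of "p (Suc (idx l))"])
          show "p (Suc (idx l)) \<in> V" using hb_pV sa ik by simp
          show "{l, p (Suc (idx l))} \<in> E" using hb_edge[of "idx l"] sa ik lp by simp
          show "idx (p (Suc (idx l))) < i" using idx_p sa ik by simp
          show "p (Suc (idx l)) \<noteq> l"
          proof
            assume "p (Suc (idx l)) = l"
            then have "idx (p (Suc (idx l))) = idx l" by simp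
            then show False using idx_p[of "Suc (idx l)"] sa ik by simp
          qed
        qed
      next
        case False
        show thesis
        proof (rule that[of "p (idx l)"])
          show "p (idx l) \<in> V" using hb_pV hb_idx l by simp
          show "{l, p (idx l)} \<in> E" using hb_tooth[OF l(1) False] by simp
          show "p (idx l) \<noteq> l"
          proof
            assume "p (idx l) = l"
            then have "l \<in> p ` {..k}" using hb_idx[OF l(1)] by (metis atMost_iff image_eqI)
            then show False using False by simp
          qed
          show "idx (p (idx l)) < i" using idx_p hb_idx l li by simp
        qed
      qed
      show ?thesis
      proof (rule ccontr)
        assume neg: "\<not> \<sigma> * orient (p i) r l > 0"
        have "orient P r l \<noteq> 0" using hb_gp[OF PV(1) r(1) l(1)] rP l(3) by (auto simp: P_q_def)
        then have neg': "\<sigma> * orient P r l < 0" using neg hb_sg by (auto simp: P_q_def)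
        have sdw: "\<forall>z\<in>Z i k (Suc i). orient l w z * orient l w (p i) > 0"
        proof (rule side[OF w(2) w(3)[symmetric]])
          show "l \<notin> Z i k (Suc i)" "w \<notin> Z i k (Suc i)" using li w(4) by (auto simp: Z_def)
        qed (use ik in auto)
        have Li: "\<forall>z\<in>Z 0 (i - 1) 0. orient s t z * orient s t (p 0) > 0"
          if "{s, t} \<in> E" "s \<noteq> t" "i < idx s" "i < idx t" for s t
        proof (rule side[OF that(1,2)])
          show "s \<notin> Z 0 (i - 1) 0" "t \<notin> Z 0 (i - 1) 0" using that by (auto simp: Z_def)
        qed (use ik in auto)
        have stepE: "\<sigma> * orient P l t < 0"
          if st: "s \<in> Z (Suc i) k (Suc i)" "t \<in> Z (Suc i) k (Suc i)" "{s, t} \<in> E" "s \<noteq> t"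
            and Qs: "\<sigma> * orient P l s < 0" for s t
        proof (rule ccontr)
          assume nQ: "\<not> \<sigma> * orient P l t < 0"
          have sV: "s \<in> V" "t \<in> V" "i < idx s" "i < idx t" using st by (auto simp: Z_def)
          have sP: "s \<noteq> P" "t \<noteq> P" "s \<noteq> l" "t \<noteq> l" using sV idxP li by auto
          have "orient P l t \<noteq> 0" using hb_gp[OF PV(1) l(1) sV(2)] sP l(3) by (auto simp: P_q_def)
          then have lt: "\<sigma> * orient P l t > 0" using nQ sg_pos by blast
          have qs: "\<sigma> * orient P q z \<ge> 0" if "z \<in> V" "z \<noteq> P" for z
            using hull_i[OF that] by (cases "z = q") (auto simp: orient_self2 less_imp_le)
          have Zsub: "Z (Suc i) k (Suc i) \<subseteq> Z i k (Suc i)" by (rule Z_mono) auto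
          have PZ: "P \<in> Z i k (Suc i)" using pZ ik by (simp add: P_q_def)
          have core: "orient s t P * orient s t l < 0"
          proof (rule alg_core[OF hb_sg Qs lt qs[OF sV(1) sP(1)] qs[OF sV(2) sP(2)]])
            show "\<sigma> * orient P q l > 0" using hull_i l(1) l(3) lq by (simp add: P_q_def)
            show "orient l w s * orient l w P > 0" "orient l w t * orient l w P > 0"
              using sdw st Zsub by (auto simp: P_q_def)
            show "orient P t s \<noteq> 0" using hb_gp[OF PV(1) sV(2) sV(1)] sP st(4) by auto
            show "orient s t P \<noteq> 0" using hb_gp[OF sV(1) sV(2) PV(1)] sP st(4) by auto
          qed
          have L: "\<forall>z\<in>Z 0 (i - 1) 0. orient s t z * orient s t (p 0) > 0"
            using Li[OF st(3,4) sV(3,4)] .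
          have lZ: "l \<in> Z 0 (i - 1) 0" using l li by (auto simp: Z_def)
          have AZ: "p (i - 1) \<in> Z 0 (i - 1) 0" using pZ ik by simp
          have "orient s t l * orient s t (p (i - 1)) > 0"
            using L lZ AZ by (metis sign_chain mult.commute)
          moreover have "0 \<le> orient s t (p (i - 1)) * orient s t P"
            using hb_line[OF st(3) hb_edge[of "i - 1"] st(4)] ik i1 by (simp add: P_q_def)
          ultimately show False using core by (auto simp: zero_less_mult_iff mult_less_0_iff zero_le_mult_iff)
        qed
        have allQ: "\<forall>z\<in>Z (Suc i) k (Suc i). \<sigma> * orient P l z < 0"
        proof (rule propag)
          show "\<sigma> * orient P l (p (Suc i)) < 0"
            using hull_i[OF l(1)] l(3) lq orient_swap[of P l q] by (simp add: P_q_def)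
        next
          fix j assume j: "Suc i \<le> j" "j < k" and h: "\<sigma> * orient P l (p j) < 0"
          show "\<sigma> * orient P l (p (Suc j)) < 0"
          proof (rule stepE[OF _ _ hb_edge[OF j(2)] _ h])
            show "p j \<in> Z (Suc i) k (Suc i)" "p (Suc j) \<in> Z (Suc i) k (Suc i)" using pZ j by auto
            show "p j \<noteq> p (Suc j)" using hb_inj j by (auto dest: inj_onD)
          qed
        next
          fix z assume z: "z \<in> V" "z \<notin> p ` {..k}" "Suc i \<le> idx z" "idx z \<le> k"
            and h: "\<sigma> * orient P l (p (idx z)) < 0"
          show "\<sigma> * orient P l z < 0"
          proof (rule stepE[OF _ _ _ _ h])
            show "p (idx z) \<in> Z (Suc i) k (Suc i)" using pZ z by auto
            show "z \<in> Z (Suc i) k (Suc i)" using z by (auto simp: Z_def)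
            show "{p (idx z), z} \<in> E" using hb_tooth[OF z(1,2)] by (simp add: insert_commute)
            show "p (idx z) \<noteq> z" using z by (metis atMost_iff image_eqI)
          qed
        qed (use ik in auto)
        then have "\<sigma> * orient P l r < 0" using rZ by auto
        moreover have "orient P l r = - orient P r l" by (rule orient_swap)
        ultimately show False using neg' by simp
      qed
    qed
  qed
qed

end


lemma orient_swap12: "orient b a c = - orient a b c"
  by (simp add: orient_def algebra_simps)

lemma HB_rev:
  assumes hb: "HB V E p k idx \<sigma>"
  shows "HB V E (\<lambda>j. p (k - j)) k (\<lambda>z. k - idx z) (- \<sigma>)"
proof -
  have img: "(\<lambda>j. p (k - j)) ` {..k} = p ` {..k}"
  proof
    show "(\<lambda>j. p (k - j)) ` {..k} \<subseteq> p ` {..k}" by auto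
    show "p ` {..k} \<subseteq> (\<lambda>j. p (k - j)) ` {..k}"
    proof
      fix x assume "x \<in> p ` {..k}"
      then obtain j where j: "j \<le> k" "x = p j" by auto
      then have "x = p (k - (k - j))" by simp
      then show "x \<in> (\<lambda>j. p (k - j)) ` {..k}" by auto
    qed
  qed
  have inj: "inj_on (\<lambda>j. p (k - j)) {..k}"
  proof (rule inj_onI)
    fix a b assume ab: "a \<in> {..k}" "b \<in> {..k}" "p (k - a) = p (k - b)"
    then have "k - a = k - b" using hb_inj[OF hb] by (auto dest: inj_onD)
    then show "a = b" using ab by auto
  qed
  show ?thesis
    unfolding HB_def img
  proof (intro conjI allI ballI impI)
    show "1 \<le> k" using hb_k[OF hb] .
    show "inj_on (\<lambda>j. p (k - j)) {..k}" using inj .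
    show "- \<sigma> = 1 \<or> - \<sigma> = -1" using hb_sg[OF hb] by auto
  next
    fix j assume "j \<le> k" then show "p (k - j) \<in> V" using hb_pV[OF hb] by simp
  next
    fix z assume "z \<in> V" then show "k - idx z \<le> k" by simp
  next
    fix z assume z: "z \<in> V" "z \<in> p ` {..k}"
    then show "p (k - (k - idx z)) = z" using hb_path[OF hb] hb_idx[OF hb] by simp
  next
    fix z assume z: "z \<in> V" "z \<notin> p ` {..k}"
    have t: "0 < idx z \<and> idx z < k \<and> {z, p (idx z)} \<in> E" using hb_tooth[OF hb z] .
    then show "0 < k - idx z" "k - idx z < k" "{z, p (k - (k - idx z))} \<in> E" by auto
  next
    fix j assume j: "j < k"
    define m where "m = k - Suc j"
    have m: "m < k" "k - j = Suc m" using j by (auto simp: m_def)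
    show "{p (k - j), p (k - Suc j)} \<in> E"
      using hb_edge[OF hb m(1)] m by (simp add: m_def insert_commute)
  next
    fix a b c d assume "{a, b} \<in> E" "{c, d} \<in> E" "a \<noteq> b"
    then show "0 \<le> orient a b c * orient a b d" using hb_line[OF hb] by blast
  next
    fix a b assume "{a, b} \<in> E" then show "a \<in> V" "b \<in> V" using hb_EV[OF hb] by auto
  next
    fix a b c assume "a \<in> V" "b \<in> V" "c \<in> V" "a \<noteq> b" "a \<noteq> c" "b \<noteq> c"
    then show "orient a b c \<noteq> 0" using hb_gp[OF hb] by blast
  next
    fix j z assume j: "j < k" and z: "z \<in> V" "z \<noteq> p (k - j)" "z \<noteq> p (k - Suc j)"
    define m where "m = k - Suc j"
    have m: "m < k" "k - j = Suc m" using j by (auto simp: m_def)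
    have "\<sigma> * orient (p m) (p (Suc m)) z > 0" using hb_hull[OF hb m(1) z(1)] z m by (simp add: m_def)
    then show "- \<sigma> * orient (p (k - j)) (p (k - Suc j)) z > 0"
      using m orient_swap12[of "p (Suc m)" "p m" z] by (simp add: m_def)
  qed
qed



lemma ivt_nat: "P 0 \<Longrightarrow> \<not> P k \<Longrightarrow> \<exists>i<k. P i \<and> \<not> P (Suc i)"
proof (induction k)
  case 0 then show ?case by simp
next
  case (Suc k)
  then show ?case by (cases "P k") (auto intro: less_SucI)
qed

lemma complete_edges_mem: "{a, b} \<in> complete_edges V \<Longrightarrow> a \<in> V \<and> b \<in> V"
  unfolding complete_edges_def by (auto simp: doubleton_eq_iff)

lemma complete_edges_nb:
  assumes "e \<in> complete_edges V" "v \<in> e"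
  shows "\<exists>y\<in>V. y \<noteq> v \<and> e = {v, y}"
  using assms unfolding complete_edges_def by (auto simp: insert_commute)

lemma nb:
  assumes "simple_spanning V H" "v \<in> V"
  shows "\<exists>y\<in>V. y \<noteq> v \<and> {v, y} \<in> H"
proof -
  obtain e where e: "e \<in> H" "v \<in> e" using assms unfolding simple_spanning_def by blast
  then have "e \<in> complete_edges V" using assms unfolding simple_spanning_def by blast
  then show ?thesis using complete_edges_nb[OF _ e(2)] e(1) by blast
qed

lemma path_interior_nth:
  assumes "x \<in> path_interior ps"
  shows "\<exists>j. 0 < j \<and> j < length ps - 1 \<and> ps ! j = x"
proof -
  from assms obtain m where m: "m < length (butlast (tl ps))" "x = butlast (tl ps) ! m"
    unfolding path_interior_def by (auto simp: in_set_conv_nth)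
  have "butlast (tl ps) ! m = tl ps ! m" using m(1) by (simp add: nth_butlast)
  also have "\<dots> = ps ! Suc m" using m(1) by (simp add: nth_tl)
  finally show ?thesis using m by (intro exI[of _ "Suc m"]) auto
qed



lemma comb_HB:
  assumes fin: "finite V" and gp: "general_position V" and cb: "comb V B"
  shows "\<exists>p k idx \<sigma>. HB V B p k idx \<sigma>"
proof -
  from cb obtain ps where len2: "length ps \<ge> 2" and dist: "distinct ps" and sub: "set ps \<subseteq> V"
    and bd: "boundary_edges V B = path_edges ps"
    and tt: "\<forall>v\<in>V - set ps. (\<exists>!e. e \<in> B \<and> v \<in> e) \<and> (\<exists>p\<in>path_interior ps. {v, p} \<in> B)"
    and lc: "\<forall>a b c d. {a, b} \<in> B \<longrightarrow> {c, d} \<in> B \<longrightarrow> a \<noteq> b \<longrightarrow> \<not> line_crosses a b c d"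
    and ssB: "simple_spanning V B"
    unfolding comb_def by blast
  define k where "k = length ps - 1"
  define p where "p = (\<lambda>j. ps ! j)"
  have lenk: "length ps = Suc k" "1 \<le> k" using len2 by (auto simp: k_def)
  have pinj: "p a = p b \<longleftrightarrow> a = b" if "a \<le> k" "b \<le> k" for a b
    using nth_eq_iff_index_eq[OF dist, of a b] that lenk by (simp add: p_def)
  have pV: "p j \<in> V" if "j \<le> k" for j using that sub lenk nth_mem[of j ps] by (auto simp: p_def)
  have Pset: "p ` {..k} = set ps"
    by (auto simp: p_def set_conv_nth lenk less_Suc_eq_le)
  define pos where "pos x = (THE j. j \<le> k \<and> p j = x)" for x
  have pos_p: "pos (p j) = j" if "j \<le> k" for j
    unfolding pos_def using that pinj by (intro the_equality) auto
  have pos_set: "pos x \<le> k \<and> p (pos x) = x" if xs: "x \<in> set ps" for x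
  proof -
    obtain j where "j \<le> k" "x = p j" using xs Pset by (metis atMost_iff imageE)
    then show ?thesis using pos_p by simp
  qed
  define \<tau> where "\<tau> z = (SOME w. w \<in> path_interior ps \<and> {z, w} \<in> B)" for z
  have tau: "\<tau> z \<in> path_interior ps \<and> {z, \<tau> z} \<in> B" if "z \<in> V" "z \<notin> set ps" for z
    unfolding \<tau>_def using tt that by (metis (no_types, lifting) DiffI someI_ex)
  have pint: "\<exists>j. 0 < j \<and> j < k \<and> p j = x" if "x \<in> path_interior ps" for x
    using path_interior_nth[OF that] by (simp add: p_def k_def)
  define idx where "idx z = pos (if z \<in> set ps then z else \<tau> z)" for z
  have edgeB: "{p j, p (Suc j)} \<in> B \<and> convex hull {p j, p (Suc j)} \<subseteq> frontier (convex hull V)"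
    if "j < k" for j
  proof -
    have "(ps ! j, ps ! Suc j) \<in> set (zip ps (tl ps))"
      using that lenk by (auto simp: in_set_zip nth_tl intro!: exI[of _ j])
    then have "{p j, p (Suc j)} \<in> path_edges ps" unfolding path_edges_def p_def by force
    then show ?thesis using bd unfolding boundary_edges_def by auto
  qed
  have sj: "\<exists>s. (s = 1 \<or> s = -1) \<and> (\<forall>z\<in>V. z \<noteq> p j \<longrightarrow> z \<noteq> p (Suc j) \<longrightarrow> s * orient (p j) (p (Suc j)) z > 0)"
    if "j < k" for j
  proof (cases "\<exists>z0\<in>V. z0 \<noteq> p j \<and> z0 \<noteq> p (Suc j)")
    case True
    then obtain z0 where "z0 \<in> V" "z0 \<noteq> p j" "z0 \<noteq> p (Suc j)" by blast
    moreover have "p j \<noteq> p (Suc j)" using pinj that by simp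
    ultimately show ?thesis using hull_side[OF fin gp pV pV _ _ , of j "Suc j" z0] edgeB[OF that] that by auto
  next
    case False then show ?thesis by (intro exI[of _ 1]) auto
  qed
  obtain S where S: "\<And>j. j < k \<Longrightarrow> (S j = 1 \<or> S j = -1) \<and> (\<forall>z\<in>V. z \<noteq> p j \<longrightarrow> z \<noteq> p (Suc j) \<longrightarrow> S j * orient (p j) (p (Suc j)) z > 0)"
    using sj by metis
  have Sc: "S j = S 0" if "j < k" for j
    using that
  proof (induction j)
    case 0 then show ?case by simp
  next
    case (Suc j)
    have a: "S j * orient (p j) (p (Suc j)) (p (Suc (Suc j))) > 0"
      using S[of j] Suc.prems pV pinj by auto
    have b: "S (Suc j) * orient (p (Suc j)) (p (Suc (Suc j))) (p j) > 0"
      using S[of "Suc j"] Suc.prems pV pinj by auto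
    have c: "orient (p (Suc j)) (p (Suc (Suc j))) (p j) = orient (p j) (p (Suc j)) (p (Suc (Suc j)))"
      by (rule orient_cyc)
    have "S j = S (Suc j)" using a b c S[of j] S[of "Suc j"] Suc.prems
      by (auto simp: zero_less_mult_iff)
    then show ?case using Suc by simp
  qed
  have "HB V B p k idx (S 0)"
    unfolding HB_def
  proof (intro conjI allI ballI impI)
    show "1 \<le> k" using lenk by simp
    show "inj_on p {..k}" using pinj by (auto simp: inj_on_def)
    show "S 0 = 1 \<or> S 0 = -1" using S[of 0] lenk by simp
  next
    fix j assume "j \<le> k" then show "p j \<in> V" by (rule pV)
  next
    fix z assume z: "z \<in> V"
    show "idx z \<le> k"
    proof (cases "z \<in> set ps")
      case True then show ?thesis using pos_set by (simp add: idx_def)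
    next
      case False
      obtain j where j: "0 < j" "j < k" "p j = \<tau> z" using pint tau[OF z False] by blast
      then have "pos (\<tau> z) = j" using pos_p[of j] by simp
      then show ?thesis using j False by (simp add: idx_def)
    qed
  next
    fix z assume z: "z \<in> V" "z \<in> p ` {..k}"
    then show "p (idx z) = z" using pos_set Pset by (simp add: idx_def)
  next
    fix z assume z: "z \<in> V" "z \<notin> p ` {..k}"
    then have zn: "z \<notin> set ps" using Pset by simp
    obtain j where j: "0 < j" "j < k" "p j = \<tau> z" using pint tau[OF z(1) zn] by blast
    have "pos (\<tau> z) = j" using j pos_p[of j] by simp
    then have ij: "idx z = j" using zn by (simp add: idx_def)
    show "0 < idx z" "idx z < k" using ij j by auto
    show "{z, p (idx z)} \<in> B" using ij j tau[OF z(1) zn] by simp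
  next
    fix j assume "j < k" then show "{p j, p (Suc j)} \<in> B" using edgeB by simp
  next
    fix a b c d assume "{a, b} \<in> B" "{c, d} \<in> B" "a \<noteq> b"
    then show "0 \<le> orient a b c * orient a b d" using lc unfolding line_crosses_def by (meson not_le)
  next
    fix a b assume "{a, b} \<in> B"
    then have "{a, b} \<in> complete_edges V" using ssB unfolding simple_spanning_def by blast
    then show "a \<in> V" "b \<in> V" using complete_edges_mem by auto
  next
    fix a b c assume "a \<in> V" "b \<in> V" "c \<in> V" "a \<noteq> b" "a \<noteq> c" "b \<noteq> c"
    then show "orient a b c \<noteq> 0" using gp_orient[OF gp] by blast
  next
    fix j z assume "j < k" "z \<in> V" "z \<noteq> p j" "z \<noteq> p (Suc j)"
    then show "S 0 * orient (p j) (p (Suc j)) z > 0" using S[of j] Sc[of j] by auto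
  qed
  then show ?thesis by blast
qed



lemma sgn_prod: "(\<sigma>::real) = 1 \<or> \<sigma> = -1 \<Longrightarrow> \<sigma> * a > 0 \<Longrightarrow> \<sigma> * b > 0 \<Longrightarrow> a * b > 0"
  by (erule disjE) (auto simp: mult_neg_neg)

lemma comb_block:
  assumes fin: "finite V" and gp: "general_position V" and cb: "comb V B" and sH: "simple_spanning V H"
  shows "B \<inter> H \<noteq> {}"
proof
  assume empty: "B \<inter> H = {}"
  obtain p k idx \<sigma> where hb: "HB V B p k idx \<sigma>" using comb_HB[OF fin gp cb] by blast
  have hbr: "HB V B (\<lambda>j. p (k - j)) k (\<lambda>z. k - idx z) (- \<sigma>)" by (rule HB_rev[OF hb])
  define good where "good j = (\<exists>y\<in>V. {p j, y} \<in> H \<and> j < idx y)" for j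
  have k1: "1 \<le> k" using hb_k[OF hb] .
  have g0: "good 0"
  proof -
    obtain y where y: "y \<in> V" "y \<noteq> p 0" "{p 0, y} \<in> H" using nb[OF sH hb_pV[OF hb, of 0]] by auto
    have "0 < idx y"
    proof (cases "y \<in> p ` {..k}")
      case True
      then have "p (idx y) = y" using hb_path[OF hb y(1)] by simp
      then show ?thesis using y(2) by (metis gr0I)
    next
      case False then show ?thesis using hb_tooth[OF hb y(1)] by simp
    qed
    then show ?thesis using y unfolding good_def by blast
  qed
  have gk: "\<not> good k" unfolding good_def using hb_idx[OF hb] by (auto simp: not_less)
  obtain i where i: "i < k" "good i" "\<not> good (Suc i)" using ivt_nat[of good k] g0 gk by blast
  define q where "q = p (Suc i)"
  obtain y where y: "y \<in> V" "{p i, y} \<in> H" "i < idx y" using i(2) unfolding good_def by blast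
  have qV: "q \<in> V" using hb_pV[OF hb] i by (simp add: q_def)
  obtain x where x: "x \<in> V" "x \<noteq> q" "{q, x} \<in> H" using nb[OF sH qV] by auto
  have xle: "idx x \<le> Suc i" using i(3) x qV unfolding good_def q_def by (auto simp: not_less)
  have eq: "{p i, q} \<in> B" using hb_edge[OF hb i(1)] by (simp add: q_def)
  have xi: "idx x \<le> i"
  proof (rule ccontr)
    assume "\<not> idx x \<le> i"
    then have ix: "idx x = Suc i" using xle by simp
    show False
    proof (cases "x \<in> p ` {..k}")
      case True
      then have "p (idx x) = x" using hb_path[OF hb x(1)] by simp
      then show False using ix x(2) by (simp add: q_def)
    next
      case False
      then have "{x, q} \<in> B" using hb_tooth[OF hb x(1)] ix by (simp add: q_def)
      then show False using x(3) empty by (auto simp: insert_commute)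
    qed
  qed
  have idxpi: "idx (p i) = i" "idx q = Suc i" using idx_p[OF hb] i(1) by (auto simp: q_def)
  have xp: "x \<noteq> p i"
  proof
    assume "x = p i"
    then have "{p i, q} \<in> H" using x(3) by (simp add: insert_commute)
    then show False using eq empty by auto
  qed
  have yq: "y \<noteq> q" using eq empty y(2) by auto
  have yp: "y \<noteq> p i" using y(3) idxpi by auto
  have xy: "x \<noteq> y" using xi y(3) by auto
  have pq: "p i \<noteq> q" using idxpi by auto
  have A1: "\<sigma> * orient (p i) y x > 0" using angular[OF hb x(1) xi xp y(1) y(3)] .
  have yk: "idx y \<le> k" using hb_idx[OF hb y(1)] .
  have A2: "- \<sigma> * orient (p (k - (k - Suc i))) x y > 0"
  proof (rule angular[OF hbr y(1), of "k - Suc i" x])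
    show "k - idx y \<le> k - Suc i" using y(3) by simp
    show "y \<noteq> p (k - (k - Suc i))" using yq i(1) by (simp add: q_def)
    show "x \<in> V" using x(1) .
    show "k - Suc i < k - idx x" using xi i(1) by simp
  qed
  have A2': "- \<sigma> * orient q x y > 0" using A2 i(1) by (simp add: q_def Suc_diff_Suc)
  have H1: "\<sigma> * orient (p i) q y > 0" using hb_hull[OF hb i(1) y(1)] yp yq by (simp add: q_def)
  have H2: "\<sigma> * orient (p i) q x > 0" using hb_hull[OF hb i(1) x(1)] xp x(2) by (simp add: q_def)
  have sg: "\<sigma> = 1 \<or> \<sigma> = -1" using hb_sg[OF hb] .
  have c1: "orient (p i) y q * orient (p i) y x < 0"
  proof -
    have "orient (p i) y q = - orient (p i) q y" by (rule orient_swap)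
    moreover have "orient (p i) q y * orient (p i) y x > 0" using sgn_prod[OF sg H1 A1] .
    ultimately show ?thesis by simp
  qed
  have c2: "orient q x (p i) * orient q x y < 0"
  proof -
    have "orient q x (p i) = orient (p i) q x" by (rule orient_cyc)
    moreover have "orient (p i) q x * (- orient q x y) > 0" using sgn_prod[OF sg H2, of "- orient q x y"] A2' by simp
    ultimately show ?thesis by simp
  qed
  have ne: "convex hull {p i, y} \<inter> convex hull {q, x} \<noteq> {}" by (rule segs_cross[OF c1 c2])
  have "noncrossing H" using sH unfolding simple_spanning_def by blast
  then have nc: "\<And>e1 e2. e1 \<in> H \<Longrightarrow> e2 \<in> H \<Longrightarrow> e1 \<noteq> e2 \<Longrightarrow> convex hull e1 \<inter> convex hull e2 \<subseteq> e1 \<inter> e2"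
    unfolding noncrossing_def by blast
  have "{p i, y} \<noteq> {q, x}" using pq xp by (auto simp: doubleton_eq_iff)
  then have "convex hull {p i, y} \<inter> convex hull {q, x} \<subseteq> {p i, y} \<inter> {q, x}"
    by (rule nc[OF y(2) x(3)])
  moreover have "{p i, y} \<inter> {q, x} = {}" using pq xp yq xy by auto
  ultimately show False using ne by blast
qed

theorem theorem4:
  fixes V :: "pt set" and B :: "pt set set"
  assumes "finite V"
    and "general_position V"
    and "is_star V B \<or> comb V B"
  shows "\<forall>H. simple_spanning V H \<longrightarrow> B \<inter> H \<noteq> {}"
proof (intro allI impI)
  fix H assume sH: "simple_spanning V H"
  show "B \<inter> H \<noteq> {}"
  proof (cases "is_star V B")
    case True
    then obtain v where v: "v \<in> V" "B = star V v" unfolding is_star_def by blast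
    obtain y where y: "y \<in> V" "y \<noteq> v" "{v, y} \<in> H" using nb[OF sH v(1)] by blast
    have "{v, y} \<in> B" using v y unfolding star_def by blast
    then show ?thesis using y(3) by blast
  next
    case False
    then have "comb V B" using assms(3) by blast
    then show ?thesis using comb_block[OF assms(1,2) _ sH] by blast
  qed
qed



end
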